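(* For every $L\ge1$, the Lie algebra $\mathfrak{OA}_{1,L}=\mathfrak{OA}/\mathfrak I_{(t-1)^L}$ is solvable of dimension $L+\lfloor L/2\rfloor$, and the images of $X_k$ ($0\le k<L$) together with the images of $Y_j$ ($0\le j<L$, $j$ odd) form a basis of it.
   Context: Work over $\mathbb C$. $\mathfrak{sl}_2$ has basis $e,f,h$ with $[e,f]=h$, $[h,e]=2e$, $[h,f]=-2f$. The Onsager algebra is the Lie subalgebra $\mathfrak{OA}=\{p(t)e+p(t^{-1})f+q(t)h:\ p,q\in\mathbb C[t,t^{-1}],\ q(t^{-1})=-q(t)\}$ of the loop algebra $\mathbb C[t,t^{-1}]\otimes\mathfrak{sl}_2$ (bracket $[px,qy]=pq[x,y]$). $\mathfrak I_{(t-1)^L}=\{p(t)e+p(t^{-1})f+q(t)h\in\mathfrak{OA}: p,q\in(t-1)^L\mathbb C[t,t^{-1}]\}$. For $k\ge0$, $X_k=2(t-1)^ke+2(t^{-1}-1)^kf$ and $Y_k=(-1)^k\big((t-1)^k-(t^{-1}-1)^k\big)h$, elements of $\mathfrak{OA}$. $\lfloor r\rfloor$ is the integer part. *)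

theory Defs
  imports Complex_Main "HOL-Library.Poly_Mapping" "HOL-Library.Product_Plus"
begin

text \<open>Laurent polynomials C[t,t^-1] as the group algebra of the integers:
  finitely supported maps from exponents to coefficients.\<close>
type_synonym lpoly = "int \<Rightarrow>\<^sub>0 complex"

definition T :: lpoly where "T = Poly_Mapping.single 1 1"
definition Tinv :: lpoly where "Tinv = Poly_Mapping.single (-1) 1"
definition cst :: "complex \<Rightarrow> lpoly" where "cst c = Poly_Mapping.single 0 c"

definition inv_sub :: "lpoly \<Rightarrow> lpoly" where
  "inv_sub p = Poly_Mapping.map_key uminus p"

text \<open>Elements of the loop algebra C[t,t^-1] (x) sl2: a triple (a,b,c) stands
  for a e + b f + c h.  Addition, zero, minus are componentwise (Product_Plus).\<close>
type_synonym loop = "lpoly \<times> lpoly \<times> lpoly"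

definition smul :: "complex \<Rightarrow> loop \<Rightarrow> loop" where
  "smul c x = (cst c * fst x, cst c * fst (snd x), cst c * snd (snd x))"

text \<open>Bracket induced by [e,f]=h, [h,e]=2e, [h,f]=-2f.\<close>
definition br :: "loop \<Rightarrow> loop \<Rightarrow> loop" where
  "br x y = (case x of (a, b, c) \<Rightarrow> case y of (a', b', c') \<Rightarrow>
     (2 * (c * a' - a * c'), 2 * (b * c' - c * b'), a * b' - b * a'))"

definition OA :: "loop set" where
  "OA = {(p, inv_sub p, q) | p q. inv_sub q = - q}"

definition Iid :: "nat \<Rightarrow> loop set" where
  "Iid L = {(p, inv_sub p, q) | p q. inv_sub q = - q \<and>
              (T - 1) ^ L dvd p \<and> (T - 1) ^ L dvd q}"

definition X :: "nat \<Rightarrow> loop" where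
  "X k = (2 * (T - 1) ^ k, 2 * (Tinv - 1) ^ k, 0)"

definition Y :: "nat \<Rightarrow> loop" where
  "Y k = (0, 0, (-1) ^ k * ((T - 1) ^ k - (Tinv - 1) ^ k))"

definition lspan :: "loop set \<Rightarrow> loop set" where
  "lspan S = {x. \<exists>F c. finite F \<and> F \<subseteq> S \<and> x = (\<Sum>v\<in>F. smul (c v) v)}"

fun derived :: "nat \<Rightarrow> loop set" where
  "derived 0 = OA"
| "derived (Suc n) = lspan {br x y | x y. x \<in> derived n \<and> y \<in> derived n}"

definition Bidx :: "nat \<Rightarrow> (nat + nat) set" where
  "Bidx L = Inl ` {..<L} \<union> Inr ` {j. j < L \<and> odd j}"

fun bvec :: "nat + nat \<Rightarrow> loop" where
  "bvec (Inl k) = X k"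
| "bvec (Inr j) = Y j"

end

theory Submission
  imports Defs
begin


abbreviation S :: lpoly where "S \<equiv> T - 1"

lemma update_eq_add: "a \<notin> Poly_Mapping.keys f \<Longrightarrow> Poly_Mapping.update a b f = f + Poly_Mapping.single a b"
  by (rule poly_mapping_eqI) (auto simp: lookup_update lookup_add lookup_single not_in_keys_iff_lookup_eq_zero when_def)

lemma lpoly_induct[case_names zero add]:
  assumes "P 0" "\<And>p n c. P p \<Longrightarrow> P (p + Poly_Mapping.single n c)"
  shows "P (p::lpoly)"
  by (induction p rule: update_induct) (auto simp: update_eq_add assms)

lemma inv_sub_single: "inv_sub (Poly_Mapping.single n c) = Poly_Mapping.single (-n) c"
  unfolding inv_sub_def using map_key_single[of uminus "-n" c] by simp

lemma inv_sub_add: "inv_sub (p + q) = inv_sub p + inv_sub q"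
  unfolding inv_sub_def by (rule map_key_plus) simp

lemma inv_sub_zero[simp]: "inv_sub 0 = 0"
  unfolding inv_sub_def by (rule map_key_zero) simp

lemma inv_sub_minus: "inv_sub (- p) = - inv_sub p"
proof -
  have "inv_sub (- p) + inv_sub p = 0" by (simp flip: inv_sub_add)
  then show ?thesis by (simp add: eq_neg_iff_add_eq_0)
qed

lemma inv_sub_diff: "inv_sub (p - q) = inv_sub p - inv_sub q"
  by (simp only: diff_conv_add_uminus inv_sub_add inv_sub_minus)

lemma inv_sub_single_mult: "inv_sub (Poly_Mapping.single n c * q) = Poly_Mapping.single (-n) c * inv_sub q"
proof (induction q rule: lpoly_induct)
  case zero then show ?case by simp
next
  case (add p m d)
  then show ?case by (simp add: distrib_left inv_sub_add mult_single inv_sub_single)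
qed

lemma inv_sub_mult: "inv_sub (p * q) = inv_sub p * inv_sub q"
proof (induction p rule: lpoly_induct)
  case zero then show ?case by simp
next
  case (add p m d)
  then show ?case by (simp add: distrib_right inv_sub_add inv_sub_single_mult inv_sub_single)
qed

lemma inv_sub_inv[simp]: "inv_sub (inv_sub p) = p"
  by (induction p rule: lpoly_induct) (simp_all add: inv_sub_add inv_sub_single)

lemma inv_sub_one[simp]: "inv_sub 1 = 1"
  using inv_sub_single[of 0 1] by simp

lemma inv_sub_numeral[simp]: "inv_sub (numeral k) = numeral k"
  using inv_sub_single[of 0 "numeral k"] by simp

lemma inv_sub_cst[simp]: "inv_sub (cst c) = cst c"
  unfolding cst_def using inv_sub_single[of 0 c] by simp

lemma inv_sub_power: "inv_sub (p ^ k) = inv_sub p ^ k"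
  by (induction k) (simp_all add: inv_sub_mult)

lemma inv_sub_T[simp]: "inv_sub T = Tinv"
  unfolding T_def Tinv_def by (simp add: inv_sub_single)

lemma inv_sub_sum: "inv_sub (sum f A) = (\<Sum>a\<in>A. inv_sub (f a))"
  by (induction A rule: infinite_finite_induct) (simp_all add: inv_sub_add)

lemma T_Tinv: "T * Tinv = 1"
  unfolding T_def Tinv_def by (simp add: mult_single)

definition ev :: "lpoly \<Rightarrow> complex" where
  "ev p = sum (Poly_Mapping.lookup p) (Poly_Mapping.keys p)"

lemma ev_eq: "finite A \<Longrightarrow> Poly_Mapping.keys p \<subseteq> A \<Longrightarrow> ev p = sum (Poly_Mapping.lookup p) A"
  unfolding ev_def by (rule sum.mono_neutral_left) (auto simp: not_in_keys_iff_lookup_eq_zero)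

lemma ev_add: "ev (p + q) = ev p + ev q"
proof -
  let ?A = "Poly_Mapping.keys p \<union> Poly_Mapping.keys q"
  have "ev (p + q) = sum (Poly_Mapping.lookup (p + q)) ?A"
    by (rule ev_eq) (auto simp: keys_add)
  also have "\<dots> = sum (Poly_Mapping.lookup p) ?A + sum (Poly_Mapping.lookup q) ?A"
    by (simp add: lookup_add sum.distrib)
  also have "\<dots> = ev p + ev q"
    using ev_eq[of ?A p] ev_eq[of ?A q] by auto
  finally show ?thesis .
qed

lemma ev_zero[simp]: "ev 0 = 0"
  by (simp add: ev_def)

lemma ev_single[simp]: "ev (Poly_Mapping.single n c) = c"
  by (subst ev_eq[of "{n}"]) auto

lemma ev_single_mult: "ev (Poly_Mapping.single n c * q) = c * ev q"
  by (induction q rule: lpoly_induct) (simp_all add: distrib_left ev_add mult_single)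

lemma ev_mult: "ev (p * q) = ev p * ev q"
  by (induction p rule: lpoly_induct) (simp_all add: distrib_right ev_add ev_single_mult)

lemma ev_minus: "ev (- p) = - ev p"
proof -
  have "ev (- p) + ev p = 0" by (simp flip: ev_add)
  then show ?thesis by (simp add: eq_neg_iff_add_eq_0)
qed

lemma ev_diff: "ev (p - q) = ev p - ev q"
  by (simp only: diff_conv_add_uminus ev_add ev_minus)

lemma ev_one[simp]: "ev 1 = 1"
  using ev_single[of 0 1] by simp

lemma ev_numeral[simp]: "ev (numeral k) = numeral k"
  using ev_single[of 0 "numeral k"] by simp

lemma ev_cst[simp]: "ev (cst c) = c"
  by (simp add: cst_def)

lemma ev_power: "ev (p ^ k) = ev p ^ k"
  by (induction k) (simp_all add: ev_mult)

lemma ev_T[simp]: "ev T = 1" and ev_Tinv[simp]: "ev Tinv = 1"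
  by (simp_all add: T_def Tinv_def)

lemma ev_inv_sub: "ev (inv_sub p) = ev p"
  by (induction p rule: lpoly_induct) (simp_all add: ev_add inv_sub_add inv_sub_single)

lemma ev_sum: "ev (sum f A) = (\<Sum>a\<in>A. ev (f a))"
  by (induction A rule: infinite_finite_induct) (simp_all add: ev_add)

lemma T_pow: "T ^ k = Poly_Mapping.single (int k) 1"
  by (induction k) (simp_all add: T_def mult_single add.commute)

lemma S_dvd_single: "S dvd Poly_Mapping.single n 1 - 1"
proof (cases "n \<ge> 0")
  case True
  then obtain k where "n = int k" using nonneg_eq_int by blast
  then show ?thesis using power_diff_1_eq[of T k] by (simp add: T_pow)
next
  case False
  then obtain k where k: "n = - int k" by (metis nonneg_eq_int neg_0_le_iff_le le_cases minus_minus)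
  have "Poly_Mapping.single n (1::complex) - 1 = - Poly_Mapping.single n 1 * (Poly_Mapping.single (int k) 1 - 1)"
    by (simp add: algebra_simps mult_single k)
  moreover have "S dvd Poly_Mapping.single (int k) 1 - 1"
    using power_diff_1_eq[of T k] by (simp add: T_pow)
  ultimately show ?thesis by simp
qed

lemma S_dvd_cong: "S dvd p - cst (ev p)"
proof (induction p rule: lpoly_induct)
  case zero then show ?case by (simp add: cst_def)
next
  case (add p n c)
  have "p + Poly_Mapping.single n c - cst (ev (p + Poly_Mapping.single n c))
      = (p - cst (ev p)) + cst c * (Poly_Mapping.single n 1 - 1)"
    by (simp add: ev_add cst_def algebra_simps mult_single single_add)
  then show ?case by (simp only:) (rule dvd_add[OF add dvd_mult[OF S_dvd_single]])
qed

lemma S_dvd_iff: "S dvd p \<longleftrightarrow> ev p = 0"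
proof
  assume "S dvd p" then obtain r where "p = S * r" by blast
  then show "ev p = 0" by (simp add: ev_mult ev_diff)
next
  assume "ev p = 0" then show "S dvd p" using S_dvd_cong[of p] by (simp add: cst_def)
qed

lemma S_nz: "S \<noteq> 0"
proof
  assume "S = 0"
  then have "Poly_Mapping.lookup S 1 = 0" by simp
  then show False by (simp add: T_def lookup_minus lookup_single lookup_one)
qed

lemma Spow_nz: "S ^ k \<noteq> 0"
  using S_nz by simp



lemma smul_Pair: "smul c (a, b, d) = (cst c * a, cst c * b, cst c * d)"
  by (simp add: smul_def)

lemma OA_iff: "x \<in> OA \<longleftrightarrow> fst (snd x) = inv_sub (fst x) \<and> inv_sub (snd (snd x)) = - snd (snd x)"
  unfolding OA_def by (cases x) auto

lemma OA_zero: "0 \<in> OA"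
  by (simp add: OA_iff)

lemma OA_add: "x \<in> OA \<Longrightarrow> y \<in> OA \<Longrightarrow> x + y \<in> OA"
  by (simp add: OA_iff inv_sub_add)

lemma OA_minus: "x \<in> OA \<Longrightarrow> - x \<in> OA"
  by (simp add: OA_iff inv_sub_minus)

lemma OA_diff: "x \<in> OA \<Longrightarrow> y \<in> OA \<Longrightarrow> x - y \<in> OA"
  by (simp add: OA_iff inv_sub_diff)

lemma OA_smul: "x \<in> OA \<Longrightarrow> smul c x \<in> OA"
  by (cases x) (simp add: OA_iff inv_sub_mult smul_Pair)

lemma OA_br:
  assumes "x \<in> OA" "y \<in> OA" shows "br x y \<in> OA"
proof -
  obtain p q where x: "x = (p, inv_sub p, q)" and hq: "inv_sub q = - q" using assms(1) unfolding OA_def by blast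
  obtain p' q' where y: "y = (p', inv_sub p', q')" and hq': "inv_sub q' = - q'" using assms(2) unfolding OA_def by blast
  have e1: "inv_sub (2 * (q * p' - p * q')) = 2 * (inv_sub p * q' - q * inv_sub p')"
    by (simp add: inv_sub_mult inv_sub_diff hq hq' algebra_simps)
  have e2: "inv_sub (p * inv_sub p' - inv_sub p * p') = - (p * inv_sub p' - inv_sub p * p')"
    by (simp add: inv_sub_mult inv_sub_diff)
  show ?thesis unfolding x y br_def OA_iff using e1 e2 by simp
qed

lemma lspan_sub:
  assumes "0 \<in> A" "\<And>x y. x \<in> A \<Longrightarrow> y \<in> A \<Longrightarrow> x + y \<in> A" "\<And>c x. x \<in> A \<Longrightarrow> smul c x \<in> A"
    "B \<subseteq> A"
  shows "lspan B \<subseteq> A"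
proof
  fix x assume "x \<in> lspan B"
  then obtain F c where F: "finite F" "F \<subseteq> B" and x: "x = (\<Sum>v\<in>F. smul (c v) v)"
    unfolding lspan_def by blast
  have "(\<Sum>v\<in>F. smul (c v) v) \<in> A" using F
  proof (induction F rule: finite_induct)
    case empty then show ?case using assms(1) by simp
  next
    case (insert v F)
    have "v \<in> A" using insert.prems assms(4) by blast
    then have "smul (c v) v \<in> A" by (rule assms(3))
    moreover have "(\<Sum>v\<in>F. smul (c v) v) \<in> A" using insert by blast
    ultimately show ?case using insert.hyps by (simp add: assms(2))
  qed
  then show "x \<in> A" using x by simp
qed

lemma sum_in: "0 \<in> A \<Longrightarrow> (\<And>x y. x \<in> A \<Longrightarrow> y \<in> A \<Longrightarrow> x + y \<in> A) \<Longrightarrow> (\<And>i. i \<in> F \<Longrightarrow> f i \<in> A)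
  \<Longrightarrow> sum f F \<in> A"
  by (induction F rule: infinite_finite_induct) auto

lemma OA_sum: "(\<And>i. i \<in> F \<Longrightarrow> f i \<in> OA) \<Longrightarrow> sum f F \<in> OA"
  by (rule sum_in) (auto intro: OA_zero OA_add)

lemma derived_OA: "derived n \<subseteq> OA"
proof (induction n)
  case 0 then show ?case by simp
next
  case (Suc n)
  show ?case unfolding derived.simps
  proof (rule lspan_sub)
    show "0 \<in> OA" by (rule OA_zero)
  next
    show "\<And>x y. x \<in> OA \<Longrightarrow> y \<in> OA \<Longrightarrow> x + y \<in> OA" by (rule OA_add)
  next
    show "\<And>c x. x \<in> OA \<Longrightarrow> smul c x \<in> OA" by (rule OA_smul)
  next
    show "{br x y |x y. x \<in> derived n \<and> y \<in> derived n} \<subseteq> OA"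
    proof
    fix z assume "z \<in> {br x y |x y. x \<in> derived n \<and> y \<in> derived n}"
    then obtain x y where "z = br x y" "x \<in> derived n" "y \<in> derived n" by blast
    then show "z \<in> OA" using Suc OA_br by blast
  qed
  qed
qed

definition PP :: "nat \<Rightarrow> nat \<Rightarrow> loop set" where
  "PP j k = {x. S ^ j dvd fst x + fst (snd x) \<and> S ^ k dvd fst x - fst (snd x) \<and> S ^ k dvd snd (snd x)}"

lemma PP_zero: "0 \<in> PP j k"
  by (simp add: PP_def)

lemma PP_add: "x \<in> PP j k \<Longrightarrow> y \<in> PP j k \<Longrightarrow> x + y \<in> PP j k"
proof -
  assume x: "x \<in> PP j k" and y: "y \<in> PP j k"
  have e1: "fst (x + y) + fst (snd (x + y)) = (fst x + fst (snd x)) + (fst y + fst (snd y))"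
    and e2: "fst (x + y) - fst (snd (x + y)) = (fst x - fst (snd x)) + (fst y - fst (snd y))"
    and e3: "snd (snd (x + y)) = snd (snd x) + snd (snd y)"
    by (simp_all add: algebra_simps)
  show ?thesis using x y unfolding PP_def mem_Collect_eq e1 e2 e3 by (blast intro: dvd_add)
qed

lemma PP_smul: "x \<in> PP j k \<Longrightarrow> smul c x \<in> PP j k"
  by (cases x) (auto simp: PP_def smul_Pair simp flip: distrib_left right_diff_distrib)

lemma PP_mono: "x \<in> PP j k \<Longrightarrow> j' \<le> j \<Longrightarrow> k' \<le> k \<Longrightarrow> x \<in> PP j' k'"
  unfolding PP_def using le_imp_power_dvd dvd_trans by blast

lemma dvd_prod: "S ^ j dvd u \<Longrightarrow> S ^ k dvd v \<Longrightarrow> S ^ (j + k) dvd u * v"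
  by (simp add: power_add mult_dvd_mono)

lemma half_two: "cst (1/2) * 2 = 1"
proof -
  have t: "(2::lpoly) = Poly_Mapping.single 0 2" by simp
  show ?thesis unfolding cst_def by (subst t, subst mult_single) simp
qed

lemma dvd_half: "S ^ n dvd 2 * u \<Longrightarrow> S ^ n dvd u"
proof -
  assume "S ^ n dvd 2 * u"
  then have "S ^ n dvd cst (1/2) * (2 * u)" by simp
  also have "cst (1/2) * (2 * u) = u" by (simp add: half_two flip: mult.assoc)
  finally show ?thesis .
qed

lemma br_PP: "x \<in> PP j k \<Longrightarrow> y \<in> PP j k \<Longrightarrow> br x y \<in> PP (2 * k) (j + k)"
proof -
  assume x: "x \<in> PP j k" and y: "y \<in> PP j k"
  obtain a b c where xe: "x = (a, b, c)" by (cases x) auto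
  obtain a' b' c' where ye: "y = (a', b', c')" by (cases y) auto
  have h: "S ^ j dvd a + b" "S ^ k dvd a - b" "S ^ k dvd c"
          "S ^ j dvd a' + b'" "S ^ k dvd a' - b'" "S ^ k dvd c'"
    using x y by (simp_all add: PP_def xe ye)
  have d1: "S ^ (2 * k) dvd 2 * (c * (a' - b') - c' * (a - b))"
    unfolding mult_2[of k] by (intro dvd_mult dvd_diff dvd_prod h)
  have d2: "S ^ (j + k) dvd 2 * (c * (a' + b') - c' * (a + b))"
    using dvd_mult[OF dvd_diff[OF dvd_prod[OF h(3) h(4)] dvd_prod[OF h(6) h(1)]], of 2] by (simp only: add.commute)
  have d3: "S ^ (j + k) dvd (a' + b') * (a - b) - (a + b) * (a' - b')"
    by (intro dvd_diff dvd_prod h)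
  have eq3: "2 * (a * b' - b * a') = (a' + b') * (a - b) - (a + b) * (a' - b')"
    by (simp add: algebra_simps)
  have d3': "S ^ (j + k) dvd a * b' - b * a'"
    by (rule dvd_half) (simp only: eq3 d3)
  have e1: "2 * (c * a' - a * c') + 2 * (b * c' - c * b') = 2 * (c * (a' - b') - c' * (a - b))"
    and e2: "2 * (c * a' - a * c') - 2 * (b * c' - c * b') = 2 * (c * (a' + b') - c' * (a + b))"
    by (simp_all add: algebra_simps)
  have "br x y = (2 * (c * a' - a * c'), 2 * (b * c' - c * b'), a * b' - b * a')"
    by (simp add: xe ye br_def)
  then show ?thesis
    unfolding PP_def mem_Collect_eq by (simp only: fst_conv snd_conv e1 e2 d1 d2 d3' simp_thms)
qed

lemma lspan_br_PP: "A \<subseteq> PP j k \<Longrightarrow> lspan {br x y | x y. x \<in> A \<and> y \<in> A} \<subseteq> PP (2 * k) (j + k)"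
proof (rule lspan_sub)
  assume A: "A \<subseteq> PP j k"
  show "{br x y |x y. x \<in> A \<and> y \<in> A} \<subseteq> PP (2 * k) (j + k)"
  proof
    fix z assume "z \<in> {br x y |x y. x \<in> A \<and> y \<in> A}"
    then obtain x y where "z = br x y" "x \<in> A" "y \<in> A" by blast
    then show "z \<in> PP (2 * k) (j + k)" using A br_PP by blast
  qed
next
  show "0 \<in> PP (2 * k) (j + k)" by (rule PP_zero)
next
  show "\<And>x y. x \<in> PP (2 * k) (j + k) \<Longrightarrow> y \<in> PP (2 * k) (j + k) \<Longrightarrow> x + y \<in> PP (2 * k) (j + k)" by (rule PP_add)
next
  show "\<And>c x. x \<in> PP (2 * k) (j + k) \<Longrightarrow> smul c x \<in> PP (2 * k) (j + k)" by (rule PP_smul)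
qed

lemma OA_PP: "OA \<subseteq> PP 0 1"
proof
  fix x assume "x \<in> OA"
  then obtain p q where x: "x = (p, inv_sub p, q)" and q: "inv_sub q = - q" unfolding OA_def by blast
  have "ev q = 0" using arg_cong[OF q, of ev] by (simp add: ev_inv_sub ev_minus)
  moreover have "ev (p - inv_sub p) = 0" by (simp add: ev_diff ev_inv_sub)
  ultimately show "x \<in> PP 0 1" by (simp add: PP_def x S_dvd_iff)
qed

lemma derived_PP: "derived (Suc n) \<subseteq> PP (Suc n) (Suc n)"
proof (induction n)
  case 0
  have "derived 1 \<subseteq> PP (2 * 1) (0 + 1)"
    using lspan_br_PP[OF OA_PP] by simp
  then show ?case using PP_mono[of _ 2 1 "Suc 0" "Suc 0"] by auto
next
  case (Suc n)
  have "derived (Suc (Suc n)) \<subseteq> PP (2 * Suc n) (Suc n + Suc n)"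
    using lspan_br_PP[OF Suc] by simp
  then show ?case using PP_mono[of _ "2 * Suc n" "Suc n + Suc n" "Suc (Suc n)" "Suc (Suc n)"] by auto
qed

lemma Iid_iff: "x \<in> Iid L \<longleftrightarrow> x \<in> OA \<and> S ^ L dvd fst x \<and> S ^ L dvd snd (snd x)"
proof
  assume "x \<in> Iid L"
  then obtain p q where "x = (p, inv_sub p, q)" "inv_sub q = - q" "S ^ L dvd p" "S ^ L dvd q"
    unfolding Iid_def by blast
  then show "x \<in> OA \<and> S ^ L dvd fst x \<and> S ^ L dvd snd (snd x)" unfolding OA_def by simp
next
  assume h: "x \<in> OA \<and> S ^ L dvd fst x \<and> S ^ L dvd snd (snd x)"
  then obtain p q where "x = (p, inv_sub p, q)" "inv_sub q = - q" unfolding OA_def by blast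
  then show "x \<in> Iid L" using h unfolding Iid_def by simp
qed

lemma solvable: "L \<ge> 1 \<Longrightarrow> derived L \<subseteq> Iid L"
proof
  fix x assume L: "L \<ge> 1" and x: "x \<in> derived L"
  obtain n where n: "L = Suc n" using L by (cases L) auto
  have "x \<in> PP L L" using derived_PP[of n] x n by blast
  then have h: "S ^ L dvd fst x + fst (snd x)" "S ^ L dvd fst x - fst (snd x)" "S ^ L dvd snd (snd x)"
    unfolding PP_def by blast+
  have "S ^ L dvd (fst x + fst (snd x)) + (fst x - fst (snd x))" using h by (simp only: dvd_add)
  moreover have "(fst x + fst (snd x)) + (fst x - fst (snd x)) = 2 * fst x" unfolding mult_2 by (simp add: algebra_simps)
  ultimately have "S ^ L dvd 2 * fst x" by (simp only:)
  then have "S ^ L dvd fst x" by (rule dvd_half)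
  moreover have "x \<in> OA" using derived_OA x by blast
  ultimately show "x \<in> Iid L" using h(3) unfolding Iid_iff by blast
qed



definition U :: "nat \<Rightarrow> lpoly" where "U j = (-1) ^ j * (1 - (- Tinv) ^ j)"
definition W :: "nat \<Rightarrow> lpoly" where "W j = (-1) ^ j * ((T - 1) ^ j - (Tinv - 1) ^ j)"

lemma Tinv_S: "Tinv - 1 = - Tinv * S"
  using T_Tinv by (simp add: algebra_simps)

lemma W_eq: "W j = S ^ j * U j"
  unfolding W_def U_def Tinv_S power_mult_distrib by (simp add: algebra_simps)

lemma ev_U: "ev (U j) = (-1) ^ j * (1 - (-1) ^ j)"
  by (simp add: U_def ev_mult ev_diff ev_power ev_minus)

lemma ev_U_odd: "odd j \<Longrightarrow> ev (U j) \<noteq> 0"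
  by (simp add: ev_U)

lemma inv_sub_S: "inv_sub S = Tinv - 1"
  by (simp add: inv_sub_diff)

lemma inv_sub_m1pow: "inv_sub ((-1) ^ j) = (-1) ^ j"
  by (simp add: inv_sub_power inv_sub_minus)

lemma inv_sub_Tinv: "inv_sub Tinv = T"
  using inv_sub_inv[of T] by simp

lemma inv_W: "inv_sub (W j) = - W j"
proof -
  have "inv_sub (W j) = (-1) ^ j * ((Tinv - 1) ^ j - (T - 1) ^ j)"
    unfolding W_def by (simp only: inv_sub_mult inv_sub_diff inv_sub_power inv_sub_minus inv_sub_Tinv inv_sub_T inv_sub_one)
  also have "\<dots> = - W j" unfolding W_def by (simp only: minus_mult_right minus_diff_eq)
  finally show ?thesis .
qed

lemma X_OA: "X k \<in> OA"
  unfolding X_def OA_iff by (simp add: inv_sub_mult inv_sub_power inv_sub_S)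

lemma Y_OA: "Y k \<in> OA"
  unfolding Y_def OA_iff using inv_W[of k] by (simp add: W_def)

lemma fst_smul: "fst (smul c x) = cst c * fst x"
  and snd2_smul: "snd (snd (smul c x)) = cst c * snd (snd x)"
  by (simp_all add: smul_def)

abbreviation Odd :: "nat \<Rightarrow> nat set" where "Odd L \<equiv> {j. j < L \<and> odd j}"

lemma sumB: "(\<Sum>i\<in>Bidx L. f i) = (\<Sum>k<L. f (Inl k)) + (\<Sum>j\<in>Odd L. f (Inr j))"
  unfolding Bidx_def
  by (subst sum.union_disjoint) (auto simp: sum.reindex)

lemma card_Odd: "card (Odd L) = L div 2"
proof (induction L)
  case 0 then show ?case by simp
next
  case (Suc L)
  show ?case
  proof (cases "odd L")
    case True
    then have "Odd (Suc L) = insert L (Odd L)" by auto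
    then show ?thesis using Suc True by simp
  next
    case False
    then have "Odd (Suc L) = Odd L" using less_Suc_eq by auto
    then show ?thesis using Suc False by simp
  qed
qed

lemma card_Bidx: "card (Bidx L) = L + nat \<lfloor>real L / 2\<rfloor>"
proof -
  have "card (Bidx L) = card (Inl ` {..<L} :: (nat + nat) set) + card (Inr ` Odd L :: (nat + nat) set)"
    unfolding Bidx_def by (rule card_Un_disjoint) auto
  also have "\<dots> = L + L div 2" by (simp add: card_image card_Odd)
  moreover have "nat \<lfloor>real L / 2\<rfloor> = L div 2"
    using floor_divide_of_nat_eq[of L 2, where ?'a = real] by simp
  ultimately show ?thesis by simp
qed



lemma ev_S[simp]: "ev S = 0"
  by (simp add: ev_diff)

lemma S_pow_Suc_dvd: "S ^ Suc L dvd S * x \<longleftrightarrow> S ^ L dvd x"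
  using S_nz by (simp only: power_Suc dvd_mult_cancel_left) simp

lemma indep_gen:
  "(\<And>k. k < L \<Longrightarrow> ev (u k) \<noteq> 0) \<Longrightarrow> S ^ L dvd (\<Sum>k<L. cst (a k) * (S ^ k * u k)) \<Longrightarrow> \<forall>k<L. a k = 0"
proof (induction L arbitrary: a u)
  case 0 then show ?case by simp
next
  case (Suc L)
  let ?R = "\<Sum>k<L. cst (a (Suc k)) * (S ^ k * u (Suc k))"
  have sh: "(\<Sum>k<L. cst (a (Suc k)) * (S ^ Suc k * u (Suc k))) = S * ?R"
    unfolding sum_distrib_left by (rule sum.cong) (simp_all only: power_Suc ac_simps)
  have eq: "(\<Sum>k<Suc L. cst (a k) * (S ^ k * u k)) = cst (a 0) * u 0 + S * ?R"
    by (subst sum.lessThan_Suc_shift) (simp only: sh power_0 mult_1)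
  have "S dvd S ^ Suc L" by simp
  then have "S dvd cst (a 0) * u 0 + S * ?R" using dvd_trans[OF _ Suc.prems(2)] unfolding eq by blast
  then have "ev (cst (a 0) * u 0 + S * ?R) = 0" by (simp only: S_dvd_iff)
  then have "a 0 * ev (u 0) = 0" by (simp add: ev_add ev_mult)
  then have a0: "a 0 = 0" using Suc.prems(1)[of 0] by simp
  then have z: "cst (a 0) * u 0 + S * ?R = S * ?R" by (simp add: cst_def)
  have "S ^ Suc L dvd S * ?R" using Suc.prems(2) unfolding eq z .
  then have "S ^ L dvd ?R" by (simp only: S_pow_Suc_dvd)
  then have "\<forall>k<L. a (Suc k) = 0" using Suc.IH[of "\<lambda>k. u (Suc k)" "\<lambda>k. a (Suc k)"] Suc.prems(1) by blast
  then show ?case using a0 by (metis less_Suc_eq_0_disj)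
qed

lemma taylor: "\<exists>a. S ^ L dvd p - (\<Sum>k<L. cst (a k) * S ^ k)"
proof (induction L arbitrary: p)
  case 0 then show ?case by simp
next
  case (Suc L)
  obtain r where r: "p - cst (ev p) = S * r" using S_dvd_cong[of p] by (auto elim: dvdE)
  obtain b where b: "S ^ L dvd r - (\<Sum>k<L. cst (b k) * S ^ k)" using Suc.IH by blast
  define a where "a k = (case k of 0 \<Rightarrow> ev p | Suc j \<Rightarrow> b j)" for k
  have sh: "(\<Sum>k<L. cst (a (Suc k)) * S ^ Suc k) = S * (\<Sum>k<L. cst (b k) * S ^ k)"
    unfolding sum_distrib_left by (rule sum.cong) (simp_all only: a_def nat.case power_Suc ac_simps)
  have "p - (\<Sum>k<Suc L. cst (a k) * S ^ k) = (p - cst (ev p)) - S * (\<Sum>k<L. cst (b k) * S ^ k)"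
    by (subst sum.lessThan_Suc_shift, simp only: sh, simp only: power_0 mult_1 mult_1_right a_def nat.case diff_diff_eq)
  also have "\<dots> = S * (r - (\<Sum>k<L. cst (b k) * S ^ k))" by (simp add: r right_diff_distrib)
  finally have "S ^ Suc L dvd p - (\<Sum>k<Suc L. cst (a k) * S ^ k)" using b by (simp only: S_pow_Suc_dvd)
  then show ?case by blast
qed

lemma antisym:
  assumes q: "inv_sub q = - q"
  shows "\<exists>d. S ^ L dvd q - (\<Sum>j\<in>Odd L. cst (d j) * W j)"
proof (induction L)
  case 0 then show ?case by simp
next
  case (Suc L)
  then obtain d where "S ^ L dvd q - (\<Sum>j\<in>Odd L. cst (d j) * W j)" by blast
  then obtain r' where r': "q - (\<Sum>j\<in>Odd L. cst (d j) * W j) = S ^ L * r'" by (auto elim: dvdE)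
  define r where "r = q - (\<Sum>j\<in>Odd L. cst (d j) * W j)"
  have inv_r: "inv_sub r = - r"
    unfolding r_def by (simp add: inv_sub_diff inv_sub_sum inv_sub_mult inv_W q sum_negf)
  have invS: "inv_sub (S ^ L) = (- Tinv) ^ L * S ^ L"
    by (simp only: inv_sub_power inv_sub_S Tinv_S minus_mult_left power_mult_distrib)
  have "S ^ L * ((- Tinv) ^ L * inv_sub r') = S ^ L * (- r')"
    using inv_r unfolding r_def r' by (simp add: inv_sub_mult invS algebra_simps)
  then have e: "(- Tinv) ^ L * inv_sub r' = - r'" using Spow_nz[of L] mult_left_cancel by blast
  show ?case
  proof (cases "odd L")
    case True
    define e where "e = ev r' / ev (U L)"
    have eU: "ev (U L) \<noteq> 0" using True ev_U_odd by blast
    define d' where "d' = d(L := e)"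
    have O: "Odd (Suc L) = insert L (Odd L)" using True less_Suc_eq by auto
    have "(\<Sum>j\<in>Odd (Suc L). cst (d' j) * W j) = cst e * W L + (\<Sum>j\<in>Odd L. cst (d j) * W j)"
      unfolding O d'_def by (subst sum.insert) (auto intro!: sum.cong)
    then have "q - (\<Sum>j\<in>Odd (Suc L). cst (d' j) * W j) = S ^ L * (r' - cst e * U L)"
      using r' by (simp add: W_eq algebra_simps)
    moreover have "S dvd r' - cst e * U L"
      unfolding S_dvd_iff using eU by (simp add: ev_diff ev_mult e_def)
    ultimately have "S ^ Suc L dvd q - (\<Sum>j\<in>Odd (Suc L). cst (d' j) * W j)"
      by (simp add: mult_dvd_mono power_Suc2)
    then show ?thesis by blast
  next
    case False
    have "ev r' = - ev r'" using arg_cong[OF e, of ev] False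
      by (simp add: ev_mult ev_power ev_minus ev_inv_sub)
    then have "S dvd r'" by (simp add: S_dvd_iff)
    then have "S ^ Suc L dvd q - (\<Sum>j\<in>Odd L. cst (d j) * W j)"
      using r' by (simp add: mult_dvd_mono power_Suc2)
    moreover have "Odd (Suc L) = Odd L" using False less_Suc_eq by auto
    ultimately show ?thesis by auto
  qed
qed



lemma fst_X: "fst (X k) = S ^ k * 2" by (simp add: X_def mult.commute)
lemma fst_Y: "fst (Y k) = 0" by (simp add: Y_def)
lemma snd2_X: "snd (snd (X k)) = 0" by (simp add: X_def)
lemma snd2_Y: "snd (snd (Y k)) = W k" by (simp add: Y_def W_def)

lemma fstS: "fst (\<Sum>i\<in>Bidx L. smul (c i) (bvec i)) = (\<Sum>k<L. cst (c (Inl k)) * (S ^ k * 2))"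
  by (simp only: fst_add fst_sum sumB fst_smul bvec.simps fst_X fst_Y mult_zero_right sum.neutral_const add_0_right)

lemma sndS: "snd (snd (\<Sum>i\<in>Bidx L. smul (c i) (bvec i))) = (\<Sum>j\<in>Odd L. cst (c (Inr j)) * W j)"
  by (simp only: snd_add snd_sum sumB snd2_smul bvec.simps snd2_X snd2_Y mult_zero_right sum.neutral_const add_0_left)

lemma odd_sum: "(\<Sum>j\<in>Odd L. cst (d j) * W j)
   = (\<Sum>k<L. cst (if odd k then d k else 0) * (S ^ k * (if odd k then U k else 1)))"
proof -
  have "Odd L = {x \<in> {..<L}. odd x}" by auto
  then have "(\<Sum>j\<in>Odd L. cst (d j) * W j) = (\<Sum>k<L. if odd k then cst (d k) * W k else 0)"
    by (simp only: sum.inter_filter finite_lessThan)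
  also have "\<dots> = (\<Sum>k<L. cst (if odd k then d k else 0) * (S ^ k * (if odd k then U k else 1)))"
    by (rule sum.cong) (auto simp: W_eq cst_def)
  finally show ?thesis .
qed

lemma SC_OA: "(\<Sum>i\<in>Bidx L. smul (c i) (bvec i)) \<in> OA"
proof (rule OA_sum)
  fix i assume "i \<in> Bidx L"
  show "smul (c i) (bvec i) \<in> OA" by (cases i) (auto intro: OA_smul X_OA Y_OA)
qed

lemma indep:
  assumes "(\<Sum>i\<in>Bidx L. smul (c i) (bvec i)) \<in> Iid L"
  shows "\<forall>i\<in>Bidx L. c i = 0"
proof -
  have h1: "S ^ L dvd (\<Sum>k<L. cst (c (Inl k)) * (S ^ k * 2))"
    using assms unfolding Iid_iff fstS by blast
  have h2: "S ^ L dvd (\<Sum>k<L. cst (if odd k then c (Inr k) else 0) * (S ^ k * (if odd k then U k else 1)))"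
    using assms unfolding Iid_iff sndS odd_sum by blast
  have A: "\<forall>k<L. c (Inl k) = 0"
    by (rule indep_gen[OF _ h1]) simp
  have B: "\<forall>k<L. (if odd k then c (Inr k) else 0) = 0"
    by (rule indep_gen[OF _ h2]) (simp add: ev_U_odd)
  show ?thesis
  proof
    fix i assume "i \<in> Bidx L"
    then consider k where "i = Inl k" "k < L" | j where "i = Inr j" "j < L" "odd j"
      unfolding Bidx_def by blast
    then show "c i = 0"
      by cases (use A B in auto)
  qed
qed

lemma cst_half: "cst (a / 2) * (S ^ k * 2) = cst a * S ^ k"
proof -
  have t: "(2::lpoly) = cst 2" by (simp add: cst_def)
  have "cst (a / 2) * (S ^ k * 2) = (cst (a / 2) * cst 2) * S ^ k"
    by (simp only: t ac_simps)
  also have "cst (a / 2) * cst 2 = cst a" unfolding cst_def by (subst mult_single) simp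
  then have "(cst (a / 2) * cst 2) * S ^ k = cst a * S ^ k" by (simp only:)
  finally show ?thesis .
qed

lemma span:
  assumes x: "x \<in> OA"
  shows "\<exists>c. x - (\<Sum>i\<in>Bidx L. smul (c i) (bvec i)) \<in> Iid L"
proof -
  obtain p q where xe: "x = (p, inv_sub p, q)" and q: "inv_sub q = - q" using x unfolding OA_def by blast
  obtain a where a: "S ^ L dvd p - (\<Sum>k<L. cst (a k) * S ^ k)" using taylor by blast
  obtain d where d: "S ^ L dvd q - (\<Sum>j\<in>Odd L. cst (d j) * W j)" using antisym[OF q] by blast
  define c where "c i = (case i of Inl k \<Rightarrow> a k / 2 | Inr j \<Rightarrow> d j)" for i
  let ?Z = "\<Sum>i\<in>Bidx L. smul (c i) (bvec i)"
  have f: "fst ?Z = (\<Sum>k<L. cst (a k) * S ^ k)"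
    unfolding fstS c_def by (simp add: cst_half)
  have s: "snd (snd ?Z) = (\<Sum>j\<in>Odd L. cst (d j) * W j)"
    unfolding sndS c_def by simp
  have "x - ?Z \<in> Iid L"
    unfolding Iid_iff using OA_diff[OF x SC_OA] a d f s xe by simp
  then show ?thesis by blast
qed

theorem proposition4:
  fixes L :: nat
  assumes "L \<ge> 1"
  shows "(\<exists>n. derived n \<subseteq> Iid L)
       \<and> (\<forall>c. (\<Sum>i\<in>Bidx L. smul (c i) (bvec i)) \<in> Iid L \<longrightarrow> (\<forall>i\<in>Bidx L. c i = 0))
       \<and> (\<forall>x\<in>OA. \<exists>c. x - (\<Sum>i\<in>Bidx L. smul (c i) (bvec i)) \<in> Iid L)
       \<and> card (Bidx L) = L + nat \<lfloor>real L / 2\<rfloor>"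
  using solvable[OF assms] indep span card_Bidx by blast


end
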